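(* Let $X$ be a fibrewise pointed space over $B$. If $X$ is fibrewise locally equiconnected and $X\times_BX$ is a normal space, then $$\mathrm{TC}_B(X)\le\mathrm{TC}^B_B(X)\le\mathrm{TC}_B(X)+1.$$
   Context: A fibrewise space over $B$ is a space $X$ with $p_X:X\to B$; fibrewise maps satisfy $p_Y\circ f=p_X$; fibrewise homotopies $H$ satisfy $p_Y(H(x,t))=p_X(x)$ ($\simeq_B$). A fibrewise pointed space has $s_X:B\to X$ with $p_X\circ s_X=1_B$; fibrewise pointed homotopies additionally satisfy $H(s_X(b),t)=s_Y(b)$ ($\simeq^B_B$). A fibrewise map $j:A\to X$ is a fibrewise cofibration if it has the homotopy extension property for fibrewise homotopies: for every fibrewise map $f:X\to Y$ and fibrewise homotopy $H:A\times I\to Y$ with $H(-,0)=f\circ j$ there is a fibrewise homotopy $\tilde H:X\times I\to Y$ with $\tilde H(-,0)=f$ and $\tilde H\circ(j\times 1_I)=H$; it is closed if it is a closed embedding. $X$ is fibrewise locally equiconnected if the diagonal $\Delta_X:X\to X\times_BX=\{(x,y):p_X(x)=p_X(y)\}$ is a closed fibrewise cofibration. $\mathrm{secat}_B(f)$ (resp. $\mathrm{secat}^B_B(f)$) for a fibrewise (resp. fibrewise pointed) map $f:E\to X$ is the least $k$ such that $X$ is covered by $k+1$ open sets $U$ (resp. open sets $U\supseteq s_X(B)$) admitting a fibrewise (resp. fibrewise pointed) map $s:U\to E$ with $f\circ s\simeq_B$ (resp. $\simeq^B_B$) the inclusion. $P_B(X)=\{(b,\alpha)\in B\times X^I:p_X\circ\alpha\equiv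 b\}$ with projection $(b,\alpha)\mapsto b$ and section $b\mapsto(b,c_{s_X(b)})$; $X\times_BX$ has section $b\mapsto(s_X(b),s_X(b))$; $\Pi_X(b,\alpha)=(\alpha(0),\alpha(1))$. $\mathrm{TC}_B(X)=\mathrm{secat}_B(\Pi_X)$ and $\mathrm{TC}^B_B(X)=\mathrm{secat}^B_B(\Pi_X)$. *)

theory Defs
  imports "HOL-Analysis.Analysis" "HOL-Library.Extended_Nat" "HOL-Library.FuncSet"
begin

abbreviation unit_interval :: "real topology" where
  "unit_interval \<equiv> top_of_set {0..1}"

definition fib_space :: "'b topology \<Rightarrow> 'x topology \<Rightarrow> ('x \<Rightarrow> 'b) \<Rightarrow> bool" where
  "fib_space B X p \<longleftrightarrow> continuous_map X B p"

definition fibp_space :: "'b topology \<Rightarrow> 'x topology \<Rightarrow> ('x \<Rightarrow> 'b) \<Rightarrow> ('b \<Rightarrow> 'x) \<Rightarrow> bool" where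
  "fibp_space B X p s \<longleftrightarrow> continuous_map X B p \<and> continuous_map B X s \<and>
     (\<forall>b\<in>topspace B. p (s b) = b)"

definition fib_map :: "'x topology \<Rightarrow> ('x \<Rightarrow> 'b) \<Rightarrow> 'y topology \<Rightarrow> ('y \<Rightarrow> 'b) \<Rightarrow> ('x \<Rightarrow> 'y) \<Rightarrow> bool" where
  "fib_map X pX Y pY f \<longleftrightarrow> continuous_map X Y f \<and> (\<forall>x\<in>topspace X. pY (f x) = pX x)"

definition fib_homotopy :: "'x topology \<Rightarrow> ('x \<Rightarrow> 'b) \<Rightarrow> 'y topology \<Rightarrow> ('y \<Rightarrow> 'b)
    \<Rightarrow> ('x \<times> real \<Rightarrow> 'y) \<Rightarrow> bool" where
  "fib_homotopy X pX Y pY H \<longleftrightarrow> continuous_map (prod_topology X unit_interval) Y H \<and>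
     (\<forall>x\<in>topspace X. \<forall>t\<in>{0..1}. pY (H (x, t)) = pX x)"

definition fib_homotopic :: "'x topology \<Rightarrow> ('x \<Rightarrow> 'b) \<Rightarrow> 'y topology \<Rightarrow> ('y \<Rightarrow> 'b)
    \<Rightarrow> ('x \<Rightarrow> 'y) \<Rightarrow> ('x \<Rightarrow> 'y) \<Rightarrow> bool" where
  "fib_homotopic X pX Y pY f g \<longleftrightarrow> (\<exists>H. fib_homotopy X pX Y pY H \<and>
     (\<forall>x\<in>topspace X. H (x, 0) = f x \<and> H (x, 1) = g x))"

definition fibp_homotopic :: "'b topology \<Rightarrow> 'x topology \<Rightarrow> ('x \<Rightarrow> 'b) \<Rightarrow> ('b \<Rightarrow> 'x)
    \<Rightarrow> 'y topology \<Rightarrow> ('y \<Rightarrow> 'b) \<Rightarrow> ('b \<Rightarrow> 'y) \<Rightarrow> ('x \<Rightarrow> 'y) \<Rightarrow> ('x \<Rightarrow> 'y) \<Rightarrow> bool" where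
  "fibp_homotopic B X pX sX Y pY sY f g \<longleftrightarrow> (\<exists>H. fib_homotopy X pX Y pY H \<and>
     (\<forall>x\<in>topspace X. H (x, 0) = f x \<and> H (x, 1) = g x) \<and>
     (\<forall>b\<in>topspace B. \<forall>t\<in>{0..1}. H (sX b, t) = sY b))"

text \<open>The test spaces Y range over fibrewise spaces whose carrier lives in the type
  (('a + 'x) \<times> real); every fibrewise mapping cylinder of j embeds into this type, so
  this is equivalent to the HEP for all fibrewise spaces.\<close>
definition fib_cofibration :: "'b topology \<Rightarrow> 'a topology \<Rightarrow> ('a \<Rightarrow> 'b) \<Rightarrow> 'x topology
    \<Rightarrow> ('x \<Rightarrow> 'b) \<Rightarrow> ('a \<Rightarrow> 'x) \<Rightarrow> bool" where
  "fib_cofibration B A pA X pX j \<longleftrightarrow> fib_map A pA X pX j \<and>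
     (\<forall>(Y :: (('a + 'x) \<times> real) topology) pY f H.
        fib_space B Y pY \<and> fib_map X pX Y pY f \<and> fib_homotopy A pA Y pY H \<and>
        (\<forall>a\<in>topspace A. H (a, 0) = f (j a))
        \<longrightarrow> (\<exists>H'. fib_homotopy X pX Y pY H' \<and>
               (\<forall>x\<in>topspace X. H' (x, 0) = f x) \<and>
               (\<forall>a\<in>topspace A. \<forall>t\<in>{0..1}. H' (j a, t) = H (a, t))))"

definition closed_fib_cofibration :: "'b topology \<Rightarrow> 'a topology \<Rightarrow> ('a \<Rightarrow> 'b) \<Rightarrow> 'x topology
    \<Rightarrow> ('x \<Rightarrow> 'b) \<Rightarrow> ('a \<Rightarrow> 'x) \<Rightarrow> bool" where
  "closed_fib_cofibration B A pA X pX j \<longleftrightarrow> fib_cofibration B A pA X pX j \<and>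
     embedding_map A X j \<and> closedin X (j ` topspace A)"

definition fib_prod :: "'x topology \<Rightarrow> ('x \<Rightarrow> 'b) \<Rightarrow> ('x \<times> 'x) topology" where
  "fib_prod X p = subtopology (prod_topology X X)
     {(x, y). x \<in> topspace X \<and> y \<in> topspace X \<and> p x = p y}"

definition fib_prod_proj :: "('x \<Rightarrow> 'b) \<Rightarrow> ('x \<times> 'x \<Rightarrow> 'b)" where
  "fib_prod_proj p = (\<lambda>(x, y). p x)"

definition fib_prod_sec :: "('b \<Rightarrow> 'x) \<Rightarrow> ('b \<Rightarrow> 'x \<times> 'x)" where
  "fib_prod_sec s = (\<lambda>b. (s b, s b))"

definition diagonal :: "'x \<Rightarrow> 'x \<times> 'x" where
  "diagonal x = (x, x)"

definition fib_LEC :: "'b topology \<Rightarrow> 'x topology \<Rightarrow> ('x \<Rightarrow> 'b) \<Rightarrow> bool" where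
  "fib_LEC B X p \<longleftrightarrow> closed_fib_cofibration B X p (fib_prod X p) (fib_prod_proj p) diagonal"

definition paths :: "'x topology \<Rightarrow> (real \<Rightarrow> 'x) set" where
  "paths X = {\<alpha>. continuous_map unit_interval X \<alpha> \<and> \<alpha> \<in> extensional {0..1}}"

definition compact_open :: "'x topology \<Rightarrow> (real \<Rightarrow> 'x) topology" where
  "compact_open X = topology_generated_by
     (insert (paths X) {{\<alpha> \<in> paths X. \<alpha> ` K \<subseteq> V} | K V. compactin unit_interval K \<and> openin X V})"

definition fib_paths :: "'b topology \<Rightarrow> 'x topology \<Rightarrow> ('x \<Rightarrow> 'b) \<Rightarrow> ('b \<times> (real \<Rightarrow> 'x)) topology" where
  "fib_paths B X p = subtopology (prod_topology B (compact_open X))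
     {(b, \<alpha>). b \<in> topspace B \<and> \<alpha> \<in> paths X \<and> (\<forall>t\<in>{0..1}. p (\<alpha> t) = b)}"

definition fib_paths_proj :: "'b \<times> (real \<Rightarrow> 'x) \<Rightarrow> 'b" where
  "fib_paths_proj = fst"

definition fib_paths_sec :: "('b \<Rightarrow> 'x) \<Rightarrow> 'b \<Rightarrow> 'b \<times> (real \<Rightarrow> 'x)" where
  "fib_paths_sec s = (\<lambda>b. (b, restrict (\<lambda>t. s b) {0..1}))"

definition Pi_map :: "'b \<times> (real \<Rightarrow> 'x) \<Rightarrow> 'x \<times> 'x" where
  "Pi_map = (\<lambda>(b, \<alpha>). (\<alpha> 0, \<alpha> 1))"

text \<open>Fibrewise sectional category secat_B(f) of f : E \<rightarrow> X (\<infinity> if no finite cover exists).\<close>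
definition secat_B :: "'e topology \<Rightarrow> ('e \<Rightarrow> 'b) \<Rightarrow> 'x topology \<Rightarrow> ('x \<Rightarrow> 'b)
    \<Rightarrow> ('e \<Rightarrow> 'x) \<Rightarrow> enat" where
  "secat_B E pE X pX f = (INF k \<in> {k::nat. \<exists>U :: nat \<Rightarrow> 'x set.
       (\<forall>i\<le>k. openin X (U i)) \<and> (\<Union>i\<le>k. U i) = topspace X \<and>
       (\<forall>i\<le>k. \<exists>\<sigma>. fib_map (subtopology X (U i)) pX E pE \<sigma> \<and>
            fib_homotopic (subtopology X (U i)) pX X pX (f \<circ> \<sigma>) id)}. enat k)"

definition secatp_B :: "'b topology \<Rightarrow> 'e topology \<Rightarrow> ('e \<Rightarrow> 'b) \<Rightarrow> ('b \<Rightarrow> 'e)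
    \<Rightarrow> 'x topology \<Rightarrow> ('x \<Rightarrow> 'b) \<Rightarrow> ('b \<Rightarrow> 'x) \<Rightarrow> ('e \<Rightarrow> 'x) \<Rightarrow> enat" where
  "secatp_B B E pE sE X pX sX f = (INF k \<in> {k::nat. \<exists>U :: nat \<Rightarrow> 'x set.
       (\<forall>i\<le>k. openin X (U i) \<and> sX ` topspace B \<subseteq> U i) \<and> (\<Union>i\<le>k. U i) = topspace X \<and>
       (\<forall>i\<le>k. \<exists>\<sigma>. fib_map (subtopology X (U i)) pX E pE \<sigma> \<and>
            (\<forall>b\<in>topspace B. \<sigma> (sX b) = sE b) \<and>
            fibp_homotopic B (subtopology X (U i)) pX sX X pX sX (f \<circ> \<sigma>) id)}. enat k)"

definition TC_B :: "'b topology \<Rightarrow> 'x topology \<Rightarrow> ('x \<Rightarrow> 'b) \<Rightarrow> enat" where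
  "TC_B B X p = secat_B (fib_paths B X p) fib_paths_proj (fib_prod X p) (fib_prod_proj p) Pi_map"

definition TCp_B :: "'b topology \<Rightarrow> 'x topology \<Rightarrow> ('x \<Rightarrow> 'b) \<Rightarrow> ('b \<Rightarrow> 'x) \<Rightarrow> enat" where
  "TCp_B B X p s = secatp_B B (fib_paths B X p) fib_paths_proj (fib_paths_sec s)
      (fib_prod X p) (fib_prod_proj p) (fib_prod_sec s) Pi_map"

end

theory Submission
  imports Defs
begin


lemma continuous_map_generated_by:
  assumes "\<And>x. x \<in> topspace W \<Longrightarrow> f x \<in> \<Union>S"
    and "\<And>U. U \<in> S \<Longrightarrow> openin W {x \<in> topspace W. f x \<in> U}"
  shows "continuous_map W (topology_generated_by S) f"
proof -
  have "openin W {x \<in> topspace W. f x \<in> U}" if "generate_topology_on S U" for U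
    using that
  proof (induction rule: generate_topology_on.induct)
    case Empty then show ?case by simp
  next
    case (Int a b)
    have "{x \<in> topspace W. f x \<in> a \<inter> b} = {x \<in> topspace W. f x \<in> a} \<inter> {x \<in> topspace W. f x \<in> b}" by auto
    then show ?case using Int by auto
  next
    case (UN K)
    have "{x \<in> topspace W. f x \<in> \<Union>K} = (\<Union>k\<in>K. {x \<in> topspace W. f x \<in> k})" by auto
    then show ?case using UN by auto
  next
    case (Basis s) then show ?case using assms(2) by blast
  qed
  then show ?thesis using assms(1)
    unfolding continuous_map_def by (auto simp: openin_topology_generated_by_iff)
qed

lemma exp_law:
  assumes F: "continuous_map (prod_topology W unit_interval) X F"
  shows "continuous_map W (compact_open X) (\<lambda>w. restrict (\<lambda>t. F (w, t)) {0..1})"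
  unfolding compact_open_def
proof (rule continuous_map_generated_by)
  have P: "restrict (\<lambda>t. F (w, t)) {0..1} \<in> paths X" if w: "w \<in> topspace W" for w
  proof -
    have "continuous_map unit_interval X (F \<circ> (\<lambda>t. (w, t)))"
      by (rule continuous_map_compose[OF _ F]) (auto simp: w intro!: continuous_intros)
    then have "continuous_map unit_interval X (restrict (\<lambda>t. F (w, t)) {0..1})"
      by (rule continuous_map_eq) auto
    then show ?thesis unfolding paths_def by auto
  qed
  show "restrict (\<lambda>t. F (w, t)) {0..1} \<in> \<Union> (insert (paths X) {{\<alpha> \<in> paths X. \<alpha> ` K \<subseteq> V} |K V. compactin unit_interval K \<and> openin X V})"
    if "w \<in> topspace W" for w using P[OF that] by blast
  fix U assume "U \<in> insert (paths X) {{\<alpha> \<in> paths X. \<alpha> ` K \<subseteq> V} |K V. compactin unit_interval K \<and> openin X V}"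
  then consider "U = paths X" | K V where "U = {\<alpha> \<in> paths X. \<alpha> ` K \<subseteq> V}" "compactin unit_interval K" "openin X V"
    by blast
  then show "openin W {x \<in> topspace W. restrict (\<lambda>t. F (x, t)) {0..1} \<in> U}"
  proof cases
    case 1
    then have "{x \<in> topspace W. restrict (\<lambda>t. F (x, t)) {0..1} \<in> U} = topspace W" using P by auto
    then show ?thesis by simp
  next
    case 2
    have K01: "K \<subseteq> {0..1}" using compactin_subset_topspace[OF 2(2)] by simp
    have eq: "{x \<in> topspace W. restrict (\<lambda>t. F (x, t)) {0..1} \<in> U} = {w \<in> topspace W. \<forall>t\<in>K. F (w, t) \<in> V}"
      using P K01 2(1) by (auto simp: image_subset_iff)
    define Ob where "Ob = {z \<in> topspace (prod_topology W unit_interval). F z \<in> V}"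
    have Ob: "openin (prod_topology W unit_interval) Ob"
      unfolding Ob_def using F 2(3) by (simp add: continuous_map_def)
    show ?thesis unfolding eq
    proof (subst openin_subopen, clarify)
      fix w assume w: "w \<in> topspace W" "\<forall>t\<in>K. F (w, t) \<in> V"
      have "{w} \<times> K \<subseteq> Ob" using w K01 by (auto simp: Ob_def)
      from tube_lemma_right[OF Ob 2(2) w(1) this]
      obtain U0 V0 where U0: "openin W U0" "openin unit_interval V0" "w \<in> U0" "K \<subseteq> V0" "U0 \<times> V0 \<subseteq> Ob"
        by blast
      have "U0 \<subseteq> {w \<in> topspace W. \<forall>t\<in>K. F (w, t) \<in> V}"
      proof
        fix u assume u: "u \<in> U0"
        have "u \<in> topspace W" using openin_subset[OF U0(1)] u by blast
        moreover have "F (u, t) \<in> V" if "t \<in> K" for t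
          using U0(4,5) u that unfolding Ob_def by blast
        ultimately show "u \<in> {w \<in> topspace W. \<forall>t\<in>K. F (w, t) \<in> V}" by blast
      qed
      then show "\<exists>T. openin W T \<and> w \<in> T \<and> T \<subseteq> {w \<in> topspace W. \<forall>t\<in>K. F (w, t) \<in> V}"
        using U0 by blast
    qed
  qed
qed




definition inr_top :: "'b topology \<Rightarrow> ('a + 'b) topology" where
  "inr_top Z = topology (\<lambda>U. U \<subseteq> Inr ` topspace Z \<and> openin Z (Inr -` U))"

lemma istopology_inr: "istopology (\<lambda>U. U \<subseteq> Inr ` topspace Z \<and> openin Z (Inr -` U))"
  unfolding istopology_def by (auto simp: vimage_Union intro!: openin_Union)

lemma openin_inr_top: "openin (inr_top Z) U \<longleftrightarrow> U \<subseteq> Inr ` topspace Z \<and> openin Z (Inr -` U)"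
  unfolding inr_top_def topology_inverse'[OF istopology_inr[of Z]] by simp

lemma topspace_inr_top: "topspace (inr_top Z) = Inr ` topspace Z"
proof -
  have "openin (inr_top Z) (Inr ` topspace Z)"
    unfolding openin_inr_top by (simp add: inj_vimage_image_eq)
  then have "Inr ` topspace Z \<subseteq> topspace (inr_top Z)" by (rule openin_subset)
  moreover have "topspace (inr_top Z) \<subseteq> Inr ` topspace Z"
    unfolding topspace_def openin_inr_top by auto
  ultimately show ?thesis by blast
qed

lemma continuous_map_Inr: "continuous_map Z (inr_top Z) Inr"
  unfolding continuous_map_def topspace_inr_top
proof (intro conjI allI impI ballI)
  fix U assume "openin (inr_top Z) U"
  then have "U \<subseteq> Inr ` topspace Z" "openin Z (Inr -` U)" by (auto simp: openin_inr_top)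
  moreover have "{x \<in> topspace Z. Inr x \<in> U} = Inr -` U" using calculation(1) by auto
  ultimately show "openin Z {x \<in> topspace Z. Inr x \<in> U}" by simp
qed auto

lemma continuous_map_projr: "continuous_map (inr_top Z :: ('a + 'b) topology) Z projr"
  unfolding continuous_map_def topspace_inr_top
proof (intro conjI allI impI ballI)
  fix U assume U: "openin Z U"
  have "{x \<in> Inr ` topspace Z. projr x \<in> U} = (Inr ` U :: ('a + 'b) set)" using openin_subset[OF U] by force
  moreover have "openin (inr_top Z) (Inr ` U :: ('a + 'b) set)"
    unfolding openin_inr_top using U openin_subset[OF U] by (auto simp: inj_vimage_image_eq)
  ultimately show "openin (inr_top Z :: ('a + 'b) topology) {x \<in> Inr ` topspace Z. projr x \<in> U}" by (simp only:)
qed auto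

lemma topspace_fib_prod:
  "topspace (fib_prod X p) = {(x, y). x \<in> topspace X \<and> y \<in> topspace X \<and> p x = p y}"
  unfolding fib_prod_def by auto

lemma cont_fib_prod_proj:
  assumes "continuous_map X B p"
  shows "continuous_map (fib_prod X p) B (fib_prod_proj p)"
proof -
  have "continuous_map (fib_prod X p) B (p \<circ> fst)"
    unfolding fib_prod_def
    by (intro continuous_map_compose[OF _ assms] continuous_map_from_subtopology continuous_map_fst)
  then show ?thesis by (rule continuous_map_eq) (auto simp: fib_prod_proj_def)
qed

lemma cont_fib_prod_fst: "continuous_map (fib_prod X p) X fst"
  unfolding fib_prod_def by (intro continuous_map_from_subtopology continuous_map_fst)

lemma cont_fib_prod_snd: "continuous_map (fib_prod X p) X snd"
  unfolding fib_prod_def by (intro continuous_map_from_subtopology continuous_map_snd)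




lemma LEC_retraction:
  fixes X :: "'x topology" and p :: "'x \<Rightarrow> 'b" and B :: "'b topology"
  assumes pc: "continuous_map X B p" and L: "fib_LEC B X p"
  obtains \<rho> N where "openin (fib_prod X p) N" "diagonal ` topspace X \<subseteq> N"
   "continuous_map (prod_topology (fib_prod X p) unit_interval) (fib_prod X p) \<rho>"
   "\<And>z. z \<in> topspace (fib_prod X p) \<Longrightarrow> \<rho> (z,0) = z"
   "\<And>x t. x \<in> topspace X \<Longrightarrow> t \<in> {0..1} \<Longrightarrow> \<rho> ((x,x),t) = (x,x)"
   "\<And>z t. z \<in> topspace (fib_prod X p) \<Longrightarrow> t \<in> {0..1} \<Longrightarrow> fib_prod_proj p (\<rho> (z,t)) = fib_prod_proj p z"
   "\<And>z. z \<in> N \<Longrightarrow> fst (\<rho> (z,1)) = snd (\<rho> (z,1))"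
proof -
  let ?Z = "fib_prod X p" and ?pr = "fib_prod_proj p"
  have cof: "fib_cofibration B X p ?Z ?pr diagonal"
    using L unfolding fib_LEC_def closed_fib_cofibration_def by blast
  have dm: "fib_map X p ?Z ?pr diagonal" using cof unfolding fib_cofibration_def by blast
  have dc: "continuous_map X ?Z diagonal" using dm unfolding fib_map_def by blast
  have dZ: "diagonal x \<in> topspace ?Z" if "x \<in> topspace X" for x
    using continuous_map_image_subset_topspace[OF dc] that by blast
  have HEP: "\<And>(Y :: (('x + ('x \<times> 'x)) \<times> real) topology) pY f H.
        fib_space B Y pY \<Longrightarrow> fib_map ?Z ?pr Y pY f \<Longrightarrow> fib_homotopy X p Y pY H \<Longrightarrow>
        (\<forall>a\<in>topspace X. H (a, 0) = f (diagonal a))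
        \<Longrightarrow> (\<exists>H'. fib_homotopy ?Z ?pr Y pY H' \<and>
               (\<forall>x\<in>topspace ?Z. H' (x, 0) = f x) \<and>
               (\<forall>a\<in>topspace X. \<forall>t\<in>{0..1}. H' (diagonal a, t) = H (a, t)))"
    using cof unfolding fib_cofibration_def by blast
  define T :: "('x + ('x \<times> 'x)) topology" where "T = inr_top ?Z"
  define A :: "(('x + ('x \<times> 'x)) \<times> real) set" where
    "A = {y. \<exists>z. fst y = Inr z \<and> z \<in> topspace ?Z \<and> (snd y = 0 \<or> (z \<in> diagonal ` topspace X \<and> snd y \<in> {0..1}))}"
  define Y where "Y = subtopology (prod_topology T euclideanreal) A"
  define pY where "pY = (\<lambda>y :: ('x + ('x \<times> 'x)) \<times> real. ?pr (projr (fst y)))"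
  define f where "f = (\<lambda>z :: 'x \<times> 'x. (Inr z :: 'x + ('x \<times> 'x), 0::real))"
  define H where "H = (\<lambda>y :: 'x \<times> real. (Inr (diagonal (fst y)) :: 'x + ('x \<times> 'x), snd y))"
  have tY: "topspace Y = A"
    unfolding Y_def A_def T_def by (auto simp: topspace_inr_top)
  have prc: "continuous_map ?Z B ?pr" by (rule cont_fib_prod_proj[OF pc])
  have fs: "fib_space B Y pY"
    unfolding fib_space_def pY_def Y_def T_def
    by (intro continuous_map_compose[OF _ prc, unfolded o_def] continuous_map_compose[OF _ continuous_map_projr, unfolded o_def]
          continuous_map_from_subtopology continuous_map_fst)
  have fm: "fib_map ?Z ?pr Y pY f"
    unfolding fib_map_def
  proof
    show "continuous_map ?Z Y f"
      unfolding Y_def f_def T_def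
      by (auto simp: continuous_map_in_subtopology A_def intro!: continuous_intros continuous_map_Inr)
    show "\<forall>x\<in>topspace ?Z. pY (f x) = ?pr x" by (simp add: pY_def f_def)
  qed
  have hm: "fib_homotopy X p Y pY H"
    unfolding fib_homotopy_def
  proof
    have c1: "continuous_map (prod_topology X unit_interval) T (\<lambda>y. Inr (diagonal (fst y)))"
      unfolding T_def
      by (intro continuous_map_compose[OF _ continuous_map_Inr, unfolded o_def]
          continuous_map_compose[OF _ dc, unfolded o_def] continuous_map_fst)
    have c2: "continuous_map (prod_topology X unit_interval) euclideanreal snd"
      by (rule continuous_map_into_fulltopology[OF continuous_map_snd])
    show "continuous_map (prod_topology X unit_interval) Y H"
      unfolding Y_def H_def continuous_map_in_subtopology
    proof (intro conjI continuous_map_pairedI c1 c2)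
      have "(Inr (diagonal a), b) \<in> A" if "a \<in> topspace X" "b \<in> {0..1}" for a and b :: real
        using that dZ[OF that(1)] unfolding A_def mem_Collect_eq fst_conv snd_conv by blast
      then show "(\<lambda>y. (Inr (diagonal (fst y)) :: 'x + ('x \<times> 'x), snd y)) \<in> topspace (prod_topology X unit_interval) \<rightarrow> A" by auto
    qed
    show "\<forall>x\<in>topspace X. \<forall>t\<in>{0..1}. pY (H (x, t)) = p x"
      by (simp add: pY_def H_def diagonal_def fib_prod_proj_def)
  qed
  have h0: "\<forall>a\<in>topspace X. H (a, 0) = f (diagonal a)" by (simp add: H_def f_def)
  obtain H' where H': "fib_homotopy ?Z ?pr Y pY H'" "\<forall>x\<in>topspace ?Z. H' (x, 0) = f x"
    "\<forall>a\<in>topspace X. \<forall>t\<in>{0..1}. H' (diagonal a, t) = H (a, t)"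
    using HEP[OF fs fm hm h0] by blast
  have H'c: "continuous_map (prod_topology ?Z unit_interval) (prod_topology T euclideanreal) H'"
    using H'(1) unfolding fib_homotopy_def Y_def by (meson continuous_map_into_fulltopology)
  have H'A: "H' y \<in> A" if "y \<in> topspace (prod_topology ?Z unit_interval)" for y
    using continuous_map_image_subset_topspace[OF conjunct1[OF H'(1)[unfolded fib_homotopy_def]]] that tY by blast
  define \<rho> where "\<rho> = (\<lambda>y. projr (fst (H' y)))"
  define \<tau> where "\<tau> = (\<lambda>z. snd (H' (z, 1::real)))"
  define N where "N = {z \<in> topspace ?Z. 0 < \<tau> z}"
  have projc: "continuous_map T ?Z projr" unfolding T_def by (rule continuous_map_projr)
  have \<rho>c: "continuous_map (prod_topology ?Z unit_interval) ?Z \<rho>"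
    unfolding \<rho>_def
    by (rule continuous_map_compose[OF continuous_map_compose[OF H'c continuous_map_fst] projc, unfolded o_def])
  have \<tau>c: "continuous_map ?Z euclideanreal \<tau>"
  proof -
    have "continuous_map ?Z (prod_topology ?Z unit_interval) (\<lambda>z. (z, 1::real))"
      by (auto intro!: continuous_intros)
    from continuous_map_compose[OF continuous_map_compose[OF this H'c] continuous_map_snd]
    show ?thesis unfolding \<tau>_def o_def .
  qed
  have Nopen: "openin ?Z N"
  proof -
    have "openin ?Z {z \<in> topspace ?Z. \<tau> z \<in> {0<..}}"
      using \<tau>c open_greaterThan[of "0::real"] unfolding continuous_map_def by (simp only: open_openin[symmetric])
    then show ?thesis unfolding N_def by simp
  qed
  have diagN: "diagonal ` topspace X \<subseteq> N"
  proof
    fix z assume "z \<in> diagonal ` topspace X"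
    then obtain x where x: "x \<in> topspace X" "z = diagonal x" by blast
    have "\<tau> z = 1" using H'(3) x by (simp add: \<tau>_def H_def)
    then show "z \<in> N" using x dZ by (simp add: N_def)
  qed
  show ?thesis
  proof (rule that[OF Nopen diagN \<rho>c])
    fix z assume z: "z \<in> topspace ?Z"
    show "\<rho> (z, 0) = z" using H'(2) z by (simp add: \<rho>_def f_def)
  next
    fix x t assume "x \<in> topspace X" "t \<in> {0..(1::real)}"
    then show "\<rho> ((x, x), t) = (x, x)" using H'(3) by (simp add: \<rho>_def H_def diagonal_def)
  next
    fix z and t :: real assume z: "z \<in> topspace ?Z" "t \<in> {0..1}"
    have "pY (H' (z, t)) = ?pr z" using H'(1) z unfolding fib_homotopy_def by blast
    then show "?pr (\<rho> (z, t)) = ?pr z" by (simp add: \<rho>_def pY_def)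
  next
    fix z assume z: "z \<in> N"
    have "(z, 1::real) \<in> topspace (prod_topology ?Z unit_interval)" using z by (simp add: N_def)
    from H'A[OF this] obtain w where w: "fst (H' (z,1)) = Inr w" "w \<in> topspace ?Z"
      "snd (H' (z,1)) = 0 \<or> (w \<in> diagonal ` topspace X \<and> snd (H' (z,1)) \<in> {0..1})"
      unfolding A_def by blast
    have "snd (H' (z,1)) \<noteq> 0" using z by (simp add: N_def \<tau>_def)
    then have "w \<in> diagonal ` topspace X" using w(3) by blast
    then show "fst (\<rho> (z, 1)) = snd (\<rho> (z, 1))" using w(1) by (auto simp: \<rho>_def diagonal_def)
  qed
qed




lemma topspace_compact_open: "topspace (compact_open X) = paths X"
  unfolding compact_open_def topology_generated_by_topspace by blast

lemma nbhd_section: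
  fixes X :: "'x topology" and p :: "'x \<Rightarrow> 'b" and B :: "'b topology"
  assumes pc: "continuous_map X B p" and L: "fib_LEC B X p"
  obtains N \<sigma> where "openin (fib_prod X p) N" "diagonal ` topspace X \<subseteq> N"
   "continuous_map (subtopology (fib_prod X p) N) (fib_paths B X p) \<sigma>"
   "\<And>z. z \<in> N \<Longrightarrow> fib_paths_proj (\<sigma> z) = fib_prod_proj p z"
   "\<And>z. z \<in> N \<Longrightarrow> Pi_map (\<sigma> z) = z"
   "\<And>x. x \<in> topspace X \<Longrightarrow> \<sigma> (x,x) = (p x, restrict (\<lambda>t. x) {0..1})"
proof -
  let ?Z = "fib_prod X p" and ?pr = "fib_prod_proj p"
  obtain N \<rho> where N: "openin ?Z N" "diagonal ` topspace X \<subseteq> N"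
   and \<rho>c: "continuous_map (prod_topology ?Z unit_interval) ?Z \<rho>"
   and \<rho>0: "\<And>z. z \<in> topspace ?Z \<Longrightarrow> \<rho> (z,0) = z"
   and \<rho>d: "\<And>x t. x \<in> topspace X \<Longrightarrow> t \<in> {0..1} \<Longrightarrow> \<rho> ((x,x),t) = (x,x)"
   and \<rho>p: "\<And>z t. z \<in> topspace ?Z \<Longrightarrow> t \<in> {0..1} \<Longrightarrow> ?pr (\<rho> (z,t)) = ?pr z"
   and \<rho>1: "\<And>z. z \<in> N \<Longrightarrow> fst (\<rho> (z,1)) = snd (\<rho> (z,1))"
    by (rule LEC_retraction[OF pc L]) blast
  have NZ: "N \<subseteq> topspace ?Z" using openin_subset[OF N(1)] .
  let ?W = "subtopology ?Z N"
  have tW: "topspace ?W = N" using NZ by auto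
  have \<rho>Z: "\<rho> (z,t) \<in> topspace ?Z" if "z \<in> topspace ?Z" "t \<in> {0..1}" for z t
    using continuous_map_image_subset_topspace[OF \<rho>c] that by auto
  define \<gamma> where "\<gamma> = (\<lambda>y :: ('x \<times> 'x) \<times> real. if snd y \<le> 1/2 then fst (\<rho> (fst y, 2 * snd y)) else snd (\<rho> (fst y, 2 - 2 * snd y)))"
  let ?P = "prod_topology ?W unit_interval"
  have fstc: "continuous_map ?P ?Z fst"
    by (rule continuous_map_into_fulltopology[OF continuous_map_fst])
  have sndc: "continuous_map ?P euclideanreal snd"
    by (rule continuous_map_into_fulltopology[OF continuous_map_snd])
  have constc: "continuous_map ?P euclideanreal (\<lambda>_. 1/2::real)" by simp
  have Fc: "continuous_map ?P X \<gamma>"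
    unfolding \<gamma>_def
  proof (rule continuous_map_cases_le[OF sndc constc])
    let ?S1 = "{x \<in> topspace ?P. snd x \<le> 1/2}"
    have g1: "continuous_map (subtopology ?P ?S1) (prod_topology ?Z unit_interval) (\<lambda>y. (fst y, 2 * snd y))"
    proof (rule continuous_map_pairedI)
      show "continuous_map (subtopology ?P ?S1) ?Z fst" by (rule continuous_map_from_subtopology[OF fstc])
      have "continuous_map (subtopology ?P ?S1) euclideanreal (\<lambda>y. 2 * snd y)"
        by (intro continuous_intros continuous_map_from_subtopology sndc)
      moreover have "(\<lambda>y. 2 * snd y) \<in> topspace (subtopology ?P ?S1) \<rightarrow> {0..1}" by auto
      ultimately show "continuous_map (subtopology ?P ?S1) unit_interval (\<lambda>y. 2 * snd y)"
        by (simp add: continuous_map_in_subtopology)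
    qed
    show "continuous_map (subtopology ?P ?S1) X (\<lambda>y. fst (\<rho> (fst y, 2 * snd y)))"
      using continuous_map_compose[OF continuous_map_compose[OF g1 \<rho>c] cont_fib_prod_fst, unfolded o_def] .
    let ?S2 = "{x \<in> topspace ?P. 1/2 \<le> snd x}"
    have g2: "continuous_map (subtopology ?P ?S2) (prod_topology ?Z unit_interval) (\<lambda>y. (fst y, 2 - 2 * snd y))"
    proof (rule continuous_map_pairedI)
      show "continuous_map (subtopology ?P ?S2) ?Z fst" by (rule continuous_map_from_subtopology[OF fstc])
      have "continuous_map (subtopology ?P ?S2) euclideanreal (\<lambda>y. 2 - 2 * snd y)"
        by (intro continuous_intros continuous_map_from_subtopology sndc)
      moreover have "(\<lambda>y. 2 - 2 * snd y) \<in> topspace (subtopology ?P ?S2) \<rightarrow> {0..1}" by auto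
      ultimately show "continuous_map (subtopology ?P ?S2) unit_interval (\<lambda>y. 2 - 2 * snd y)"
        by (simp add: continuous_map_in_subtopology)
    qed
    show "continuous_map (subtopology ?P ?S2) X (\<lambda>y. snd (\<rho> (fst y, 2 - 2 * snd y)))"
      using continuous_map_compose[OF continuous_map_compose[OF g2 \<rho>c] cont_fib_prod_snd, unfolded o_def] .
    fix y assume y: "y \<in> topspace ?P" "snd y = 1/2"
    have "fst y \<in> topspace ?W" using y(1) unfolding topspace_prod_topology mem_Times_iff by blast
    then have "fst y \<in> N" using tW by blast
    then have "fst (\<rho> (fst y, 1)) = snd (\<rho> (fst y, 1))" by (rule \<rho>1)
    moreover have "2 * snd y = 1" "2 - 2 * snd y = 1" using y(2) by simp_all
    ultimately show "fst (\<rho> (fst y, 2 * snd y)) = snd (\<rho> (fst y, 2 - 2 * snd y))"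
      by simp
  qed
  define \<sigma> where "\<sigma> = (\<lambda>z. (p (fst z), restrict (\<lambda>t. \<gamma> (z, t)) {0..1}))"
  have \<gamma>p: "p (\<gamma> (z, t)) = p (fst z)" if "z \<in> N" "t \<in> {0..1}" for z t
  proof (cases "t \<le> 1/2")
    case True
    have "?pr (\<rho> (z, 2*t)) = ?pr z" using \<rho>p[of z "2*t"] that True NZ by auto
    then show ?thesis using True by (simp add: \<gamma>_def fib_prod_proj_def split: prod.splits)
  next
    case False
    have "?pr (\<rho> (z, 2-2*t)) = ?pr z" using \<rho>p[of z "2-2*t"] that False NZ by auto
    moreover have "\<rho> (z, 2-2*t) \<in> topspace ?Z" using \<rho>Z[of z "2-2*t"] that False NZ by auto
    ultimately show ?thesis using False
      by (auto simp: \<gamma>_def fib_prod_proj_def topspace_fib_prod split: prod.splits)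
  qed
  show ?thesis
  proof (rule that[OF N])
    have c1: "continuous_map ?W B (\<lambda>z. p (fst z))"
      using continuous_map_compose[OF continuous_map_from_subtopology[OF cont_fib_prod_fst] pc]
      by (simp add: o_def)
    have c2: "continuous_map ?W (compact_open X) (\<lambda>z. restrict (\<lambda>t. \<gamma> (z, t)) {0..1})"
      by (rule exp_law[OF Fc])
    have "\<sigma> z \<in> {(b, \<alpha>). b \<in> topspace B \<and> \<alpha> \<in> paths X \<and> (\<forall>t\<in>{0..1}. p (\<alpha> t) = b)}"
      if z: "z \<in> N" for z
    proof -
      have "p (fst z) \<in> topspace B" using continuous_map_image_subset_topspace[OF c1] z tW by auto
      moreover have "restrict (\<lambda>t. \<gamma> (z, t)) {0..1} \<in> paths X"
        using continuous_map_image_subset_topspace[OF c2] z tW topspace_compact_open by auto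
      ultimately show ?thesis using \<gamma>p z by (auto simp: \<sigma>_def)
    qed
    then show "continuous_map ?W (fib_paths B X p) \<sigma>"
      unfolding fib_paths_def continuous_map_in_subtopology \<sigma>_def
      using c1 c2 tW by (auto intro!: continuous_map_pairedI)
  next
    fix z assume "z \<in> N"
    then show "fib_paths_proj (\<sigma> z) = ?pr z"
      by (auto simp: \<sigma>_def fib_paths_proj_def fib_prod_proj_def split: prod.splits)
  next
    fix z assume z: "z \<in> N"
    then have "z \<in> topspace ?Z" using NZ by auto
    then show "Pi_map (\<sigma> z) = z"
      using \<rho>0 by (simp add: \<sigma>_def Pi_map_def \<gamma>_def)
  next
    fix x assume x: "x \<in> topspace X"
    have "\<gamma> ((x, x), t) = x" if "t \<in> {0..1}" for t
      using \<rho>d[OF x] that by (auto simp: \<gamma>_def)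
    then show "\<sigma> (x, x) = (p x, restrict (\<lambda>t. x) {0..1})"
      unfolding \<sigma>_def by (auto intro: restrict_ext)
  qed
qed




lemma glue_open:
  assumes h: "continuous_map X Z h" and A: "openin Z A" and C: "openin Z C" and d: "A \<inter> C = {}"
   and cov: "\<And>x. x \<in> topspace X \<Longrightarrow> h x \<in> A \<union> C"
   and f: "continuous_map (subtopology X {x \<in> topspace X. h x \<in> A}) Y f"
   and g: "continuous_map (subtopology X {x \<in> topspace X. h x \<in> C}) Y g"
  shows "continuous_map X Y (\<lambda>x. if h x \<in> A then f x else g x)"
proof (rule pasting_lemma[where I = "UNIV :: bool set"
      and T = "\<lambda>b. if b then {x \<in> topspace X. h x \<in> A} else {x \<in> topspace X. h x \<in> C}"
      and f = "\<lambda>b. if b then f else g"])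
  fix i :: bool
  show "openin X (if i then {x \<in> topspace X. h x \<in> A} else {x \<in> topspace X. h x \<in> C})"
    using h A C unfolding continuous_map_def by auto
  show "continuous_map (subtopology X (if i then {x \<in> topspace X. h x \<in> A} else {x \<in> topspace X. h x \<in> C})) Y (if i then f else g)"
    using f g by (cases i) auto
next
  fix i j :: bool and x
  assume "x \<in> topspace X \<inter> (if i then {x \<in> topspace X. h x \<in> A} else {x \<in> topspace X. h x \<in> C}) \<inter> (if j then {x \<in> topspace X. h x \<in> A} else {x \<in> topspace X. h x \<in> C})"
  then show "(if i then f else g) x = (if j then f else g) x"
    using d by (cases i; cases j) auto
next
  fix x assume "x \<in> topspace X"
  then show "\<exists>j. j \<in> UNIV \<and> x \<in> (if j then {x \<in> topspace X. h x \<in> A} else {x \<in> topspace X. h x \<in> C}) \<and>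
           (if h x \<in> A then f x else g x) = (if j then f else g) x"
    using cov by (intro exI[of _ "h x \<in> A"]) auto
qed

lemma inf_mono_enat:
  assumes "\<And>k. Q k \<Longrightarrow> P k"
  shows "(INF k\<in>{k. P k}. enat k) \<le> (INF k\<in>{k. Q k}. enat k)"
  by (rule INF_superset_mono) (use assms in auto)

lemma inf_step_enat:
  assumes "\<And>k. P k \<Longrightarrow> Q (Suc k)"
  shows "(INF k\<in>{k. Q k}. enat k) \<le> (INF k\<in>{k::nat. P k}. enat k) + 1"
proof (cases "\<exists>k. P k")
  case False
  then have "{k. P k} = {}" by auto
  then show ?thesis by (simp add: top_enat_def)
next
  case True
  define k0 where "k0 = (LEAST k. P k)"
  have k0: "P k0" using True LeastI_ex unfolding k0_def by metis
  have "(INF k\<in>{k::nat. P k}. enat k) = enat k0"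
  proof (rule antisym)
    show "(INF k\<in>{k::nat. P k}. enat k) \<le> enat k0" using k0 by (auto intro: INF_lower)
    show "enat k0 \<le> (INF k\<in>{k::nat. P k}. enat k)"
      by (rule INF_greatest) (auto simp: k0_def intro: Least_le)
  qed
  moreover have "(INF k\<in>{k. Q k}. enat k) \<le> enat (Suc k0)"
    using assms[OF k0] by (auto intro: INF_lower)
  ultimately show ?thesis by (simp add: eSuc_enat[symmetric] eSuc_plus_1)
qed




lemma fibp_imp_fib: "fibp_homotopic B X pX sX Y pY sY f g \<Longrightarrow> fib_homotopic X pX Y pY f g"
  unfolding fibp_homotopic_def fib_homotopic_def by blast

lemma key_step:
  fixes B :: "'b topology" and X :: "'x topology" and p :: "'x \<Rightarrow> 'b" and s :: "'b \<Rightarrow> 'x"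
  assumes fs: "fibp_space B X p s"
    and L: "fib_LEC B X p"
    and nor: "normal_space (fib_prod X p)"
    and hyp: "\<exists>U :: nat \<Rightarrow> ('x \<times> 'x) set.
       (\<forall>i\<le>k. openin (fib_prod X p) (U i)) \<and> (\<Union>i\<le>k. U i) = topspace (fib_prod X p) \<and>
       (\<forall>i\<le>k. \<exists>\<sigma>. fib_map (subtopology (fib_prod X p) (U i)) (fib_prod_proj p) (fib_paths B X p) fib_paths_proj \<sigma> \<and>
            fib_homotopic (subtopology (fib_prod X p) (U i)) (fib_prod_proj p) (fib_prod X p) (fib_prod_proj p) (Pi_map \<circ> \<sigma>) id)"
  shows "\<exists>U :: nat \<Rightarrow> ('x \<times> 'x) set.
       (\<forall>i\<le>Suc k. openin (fib_prod X p) (U i) \<and> fib_prod_sec s ` topspace B \<subseteq> U i) \<and> (\<Union>i\<le>Suc k. U i) = topspace (fib_prod X p) \<and>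
       (\<forall>i\<le>Suc k. \<exists>\<sigma>. fib_map (subtopology (fib_prod X p) (U i)) (fib_prod_proj p) (fib_paths B X p) fib_paths_proj \<sigma> \<and>
            (\<forall>b\<in>topspace B. \<sigma> (fib_prod_sec s b) = fib_paths_sec s b) \<and>
            fibp_homotopic B (subtopology (fib_prod X p) (U i)) (fib_prod_proj p) (fib_prod_sec s) (fib_prod X p) (fib_prod_proj p) (fib_prod_sec s) (Pi_map \<circ> \<sigma>) id)"
proof -
  let ?Z = "fib_prod X p" and ?pr = "fib_prod_proj p" and ?E = "fib_paths B X p" and ?sX = "fib_prod_sec s"
  have pc: "continuous_map X B p" and sc: "continuous_map B X s" and ps: "\<And>b. b \<in> topspace B \<Longrightarrow> p (s b) = b"
    using fs unfolding fibp_space_def by auto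
  obtain N \<sigma> where N: "openin ?Z N" "diagonal ` topspace X \<subseteq> N"
   and \<sigma>c: "continuous_map (subtopology ?Z N) ?E \<sigma>"
   and \<sigma>p: "\<And>z. z \<in> N \<Longrightarrow> fib_paths_proj (\<sigma> z) = ?pr z"
   and \<sigma>P: "\<And>z. z \<in> N \<Longrightarrow> Pi_map (\<sigma> z) = z"
   and \<sigma>d: "\<And>x. x \<in> topspace X \<Longrightarrow> \<sigma> (x,x) = (p x, restrict (\<lambda>t. x) {0..1})"
    by (rule nbhd_section[OF pc L]) blast
  have NZ: "N \<subseteq> topspace ?Z" using openin_subset[OF N(1)] .
  have dcl: "closedin ?Z (diagonal ` topspace X)"
    using L unfolding fib_LEC_def closed_fib_cofibration_def by blast
  have ccl: "closedin ?Z (topspace ?Z - N)" using N(1) by (simp add: closedin_diff)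
  have dj0: "disjnt (diagonal ` topspace X) (topspace ?Z - N)" using N(2) by (auto simp: disjnt_def)
  obtain N1 V where N1: "openin ?Z N1" "openin ?Z V" "diagonal ` topspace X \<subseteq> N1"
      "topspace ?Z - N \<subseteq> V" "disjnt N1 V"
    using nor[unfolded normal_space_def, rule_format, OF conjI[OF dcl conjI[OF ccl dj0]]] by blast
  have N1Z: "N1 \<subseteq> topspace ?Z" using openin_subset[OF N1(1)] .
  have N1N: "N1 \<subseteq> N" using N1Z N1(4,5) by (auto simp: disjnt_def)
  have N1V: "N1 \<inter> V = {}" using N1(5) by (simp add: disjnt_def)
  have sN1: "?sX b \<in> N1" if "b \<in> topspace B" for b
  proof -
    have "s b \<in> topspace X" using continuous_map_image_subset_topspace[OF sc] that by blast
    then show ?thesis using N1(3) by (force simp: fib_prod_sec_def diagonal_def)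
  qed
  have \<sigma>s: "\<sigma> (?sX b) = fib_paths_sec s b" if "b \<in> topspace B" for b
  proof -
    have "s b \<in> topspace X" using continuous_map_image_subset_topspace[OF sc] that by blast
    then show ?thesis using \<sigma>d ps[OF that] by (simp add: fib_prod_sec_def fib_paths_sec_def)
  qed
  from hyp obtain U :: "nat \<Rightarrow> ('x \<times> 'x) set" where
    hU: "(\<forall>i\<le>k. openin ?Z (U i)) \<and> (\<Union>i\<le>k. U i) = topspace ?Z \<and>
    (\<forall>i\<le>k. \<exists>\<sigma>. fib_map (subtopology ?Z (U i)) ?pr ?E fib_paths_proj \<sigma> \<and>
            fib_homotopic (subtopology ?Z (U i)) ?pr ?Z ?pr (Pi_map \<circ> \<sigma>) id)"
    by (rule exE)
  note Uo = conjunct1[OF hU] and Uc = conjunct1[OF conjunct2[OF hU]] and Us = conjunct2[OF conjunct2[OF hU]]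
  define U' where "U' = (\<lambda>i. if i = Suc k then N else (U i \<inter> V) \<union> N1)"
  have fstZ: "continuous_map (prod_topology (subtopology ?Z W) unit_interval) ?Z fst" for W
    by (rule continuous_map_into_fulltopology[OF continuous_map_fst])
  show ?thesis
  proof (rule exI[of _ U'], intro conjI allI impI)
    fix i assume i: "i \<le> Suc k"
    show "openin ?Z (U' i)"
      using N(1) N1(1,2) Uo i by (auto simp: U'_def intro!: openin_Un openin_Int)
    show "?sX ` topspace B \<subseteq> U' i" using sN1 N1N by (auto simp: U'_def)
  next
    show "(\<Union>i\<le>Suc k. U' i) = topspace ?Z"
    proof
      show "(\<Union>i\<le>Suc k. U' i) \<subseteq> topspace ?Z"
        using NZ N1Z Uc by (auto simp: U'_def)
    next
      show "topspace ?Z \<subseteq> (\<Union>i\<le>Suc k. U' i)"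
      proof
        fix z assume z: "z \<in> topspace ?Z"
        show "z \<in> (\<Union>i\<le>Suc k. U' i)"
        proof (cases "z \<in> N")
          case True
          then show ?thesis by (auto simp: U'_def intro!: bexI[of _ "Suc k"])
        next
          case False
          then have zV: "z \<in> V" using z N1(4) by blast
          obtain i where "i \<le> k" "z \<in> U i" using z Uc by blast
          then show ?thesis using zV by (auto simp: U'_def intro!: bexI[of _ i])
        qed
      qed
    qed
  next
    fix i assume i: "i \<le> Suc k"
    show "\<exists>\<sigma>. fib_map (subtopology ?Z (U' i)) ?pr ?E fib_paths_proj \<sigma> \<and>
            (\<forall>b\<in>topspace B. \<sigma> (?sX b) = fib_paths_sec s b) \<and>
            fibp_homotopic B (subtopology ?Z (U' i)) ?pr ?sX ?Z ?pr ?sX (Pi_map \<circ> \<sigma>) id"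
    proof (cases "i = Suc k")
      case True
      then have U'i: "U' i = N" by (simp add: U'_def)
      have tN: "topspace (subtopology ?Z N) = N" using NZ by auto
      show ?thesis unfolding U'i
      proof (intro exI[of _ \<sigma>] conjI ballI)
        show "fib_map (subtopology ?Z N) ?pr ?E fib_paths_proj \<sigma>"
          unfolding fib_map_def using \<sigma>c \<sigma>p tN by auto
        show "\<sigma> (?sX b) = fib_paths_sec s b" if "b \<in> topspace B" for b using \<sigma>s that .
        show "fibp_homotopic B (subtopology ?Z N) ?pr ?sX ?Z ?pr ?sX (Pi_map \<circ> \<sigma>) id"
          unfolding fibp_homotopic_def fib_homotopy_def
          apply (rule exI[of _ fst])
          using fstZ[of N] tN \<sigma>P sN1 N1N by auto
      qed
    next
      case False
      then have ik: "i \<le> k" using i by simp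
      define W where "W = (U i \<inter> V) \<union> N1"
      have U'i: "U' i = W" using False by (simp add: U'_def W_def)
      obtain \<sigma>i where \<sigma>i: "fib_map (subtopology ?Z (U i)) ?pr ?E fib_paths_proj \<sigma>i"
        and hi: "fib_homotopic (subtopology ?Z (U i)) ?pr ?Z ?pr (Pi_map \<circ> \<sigma>i) id"
        using Us[rule_format, OF ik] by blast
      obtain Gi where Gi: "fib_homotopy (subtopology ?Z (U i)) ?pr ?Z ?pr Gi"
        and Gi01: "\<forall>x\<in>topspace (subtopology ?Z (U i)). Gi (x, 0) = (Pi_map \<circ> \<sigma>i) x \<and> Gi (x, 1) = id x"
        using hi unfolding fib_homotopic_def by blast
      have \<sigma>ic: "continuous_map (subtopology ?Z (U i)) ?E \<sigma>i" using \<sigma>i unfolding fib_map_def by blast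
      have Gic: "continuous_map (prod_topology (subtopology ?Z (U i)) unit_interval) ?Z Gi"
        using Gi unfolding fib_homotopy_def by blast
      have UiZ: "U i \<subseteq> topspace ?Z" using openin_subset Uo ik by blast
      have tW: "topspace (subtopology ?Z W) = W" using UiZ N1Z by (auto simp: W_def)
      have UVo: "openin ?Z (U i \<inter> V)" using Uo ik N1(2) by blast
      have dj: "N1 \<inter> (U i \<inter> V) = {}" using N1V by blast
      define \<sigma>' where "\<sigma>' = (\<lambda>z. if z \<in> N1 then \<sigma> z else \<sigma>i z)"
      define G where "G = (\<lambda>y. if fst y \<in> N1 then fst y else Gi y)"
      have \<sigma>'c: "continuous_map (subtopology ?Z W) ?E \<sigma>'"
        unfolding \<sigma>'_def
      proof (rule glue_open[of _ ?Z "\<lambda>x. x", OF _ N1(1) UVo dj])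
        show "continuous_map (subtopology ?Z W) ?Z (\<lambda>x. x)"
          by (rule continuous_map_from_subtopology[OF continuous_map_id[unfolded id_def]])
        show "x \<in> N1 \<union> (U i \<inter> V)" if "x \<in> topspace (subtopology ?Z W)" for x
          using that tW by (auto simp: W_def)
        show "continuous_map (subtopology (subtopology ?Z W) {x \<in> topspace (subtopology ?Z W). x \<in> N1}) ?E \<sigma>"
          unfolding subtopology_subtopology
          by (rule continuous_map_from_subtopology_mono[OF \<sigma>c]) (use N1N in auto)
        show "continuous_map (subtopology (subtopology ?Z W) {x \<in> topspace (subtopology ?Z W). x \<in> U i \<inter> V}) ?E \<sigma>i"
          unfolding subtopology_subtopology
          by (rule continuous_map_from_subtopology_mono[OF \<sigma>ic]) auto
      qed
      let ?P = "prod_topology (subtopology ?Z W) unit_interval"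
      have tP: "topspace ?P = W \<times> {0..1}" using tW by simp
      have Gc: "continuous_map ?P ?Z G"
        unfolding G_def
      proof (rule glue_open[OF fstZ[of W] N1(1) UVo dj])
        show "fst y \<in> N1 \<union> (U i \<inter> V)" if "y \<in> topspace ?P" for y
          using that tP by (auto simp: W_def)
        show "continuous_map (subtopology ?P {x \<in> topspace ?P. fst x \<in> N1}) ?Z fst"
          by (rule continuous_map_from_subtopology[OF fstZ])
        let ?S = "subtopology ?P {x \<in> topspace ?P. fst x \<in> U i \<inter> V}"
        have "continuous_map ?S (prod_topology (subtopology ?Z (U i)) unit_interval) (\<lambda>y. (fst y, snd y))"
        proof (rule continuous_map_pairedI)
          show "continuous_map ?S (subtopology ?Z (U i)) fst"
            unfolding continuous_map_in_subtopology
            using continuous_map_from_subtopology[OF fstZ[of W]] by auto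
          show "continuous_map ?S unit_interval snd"
            by (rule continuous_map_from_subtopology[OF continuous_map_snd])
        qed
        from continuous_map_compose[OF this Gic]
        show "continuous_map ?S ?Z Gi" by (simp add: o_def)
      qed
      show ?thesis unfolding U'i
      proof (intro exI[of _ \<sigma>'] conjI ballI)
        show "fib_map (subtopology ?Z W) ?pr ?E fib_paths_proj \<sigma>'"
          unfolding fib_map_def
        proof (intro conjI ballI \<sigma>'c)
          fix z assume "z \<in> topspace (subtopology ?Z W)"
          then have "z \<in> W" using tW by simp
          then show "fib_paths_proj (\<sigma>' z) = ?pr z"
          proof (cases "z \<in> N1")
            case True
            then have "z \<in> N" using N1N by blast
            then show ?thesis using True \<sigma>p[of z] by (simp add: \<sigma>'_def)
          next
            case False
            then have "z \<in> topspace (subtopology ?Z (U i))" using \<open>z \<in> W\<close> UiZ by (auto simp: W_def)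
            then show ?thesis using \<sigma>i False unfolding fib_map_def \<sigma>'_def by auto
          qed
        qed
        show "\<sigma>' (?sX b) = fib_paths_sec s b" if "b \<in> topspace B" for b
          using \<sigma>s[OF that] sN1[OF that] by (simp add: \<sigma>'_def)
        show "fibp_homotopic B (subtopology ?Z W) ?pr ?sX ?Z ?pr ?sX (Pi_map \<circ> \<sigma>') id"
          unfolding fibp_homotopic_def fib_homotopy_def
        proof (intro exI[of _ G] conjI ballI Gc)
          fix z and t :: real assume z: "z \<in> topspace (subtopology ?Z W)" and t: "t \<in> {0..1}"
          then have zW: "z \<in> W" using tW by simp
          show "?pr (G (z, t)) = ?pr z"
          proof (cases "z \<in> N1")
            case True then show ?thesis by (simp add: G_def)
          next
            case False
            then have "z \<in> topspace (subtopology ?Z (U i))" using zW UiZ by (auto simp: W_def)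
            then show ?thesis using Gi t False unfolding fib_homotopy_def by (simp add: G_def)
          qed
        next
          fix z assume z: "z \<in> topspace (subtopology ?Z W)"
          then have zW: "z \<in> W" using tW by simp
          show "G (z, 0) = (Pi_map \<circ> \<sigma>') z"
          proof (cases "z \<in> N1")
            case True
            then have "z \<in> N" using N1N by blast
            then show ?thesis using True \<sigma>P[of z] by (simp add: G_def \<sigma>'_def)
          next
            case False
            then have "z \<in> topspace (subtopology ?Z (U i))" using zW UiZ by (auto simp: W_def)
            then show ?thesis using Gi01 False by (simp add: G_def \<sigma>'_def)
          qed
          show "G (z, 1) = id z"
          proof (cases "z \<in> N1")
            case True then show ?thesis by (simp add: G_def)
          next
            case False
            then have "z \<in> topspace (subtopology ?Z (U i))" using zW UiZ by (auto simp: W_def)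
            then show ?thesis using Gi01 False by (simp add: G_def)
          qed
        next
          fix b and t :: real assume "b \<in> topspace B" "t \<in> {0..1}"
          then show "G (?sX b, t) = ?sX b" using sN1 by (simp add: G_def)
        qed
      qed
    qed
  qed
qed

lemma mono_cond:
  assumes "\<exists>U :: nat \<Rightarrow> 'x set. (\<forall>i\<le>k. openin X (U i) \<and> sX ` topspace B \<subseteq> U i) \<and> (\<Union>i\<le>k. U i) = topspace X \<and>
       (\<forall>i\<le>k. \<exists>\<sigma>. fib_map (subtopology X (U i)) pX E pE \<sigma> \<and>
            (\<forall>b\<in>topspace B. \<sigma> (sX b) = sE b) \<and>
            fibp_homotopic B (subtopology X (U i)) pX sX X pX sX (f \<circ> \<sigma>) id)"
  shows "\<exists>U :: nat \<Rightarrow> 'x set. (\<forall>i\<le>k. openin X (U i)) \<and> (\<Union>i\<le>k. U i) = topspace X \<and>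
       (\<forall>i\<le>k. \<exists>\<sigma>. fib_map (subtopology X (U i)) pX E pE \<sigma> \<and>
            fib_homotopic (subtopology X (U i)) pX X pX (f \<circ> \<sigma>) id)"
proof -
  from assms obtain U :: "nat \<Rightarrow> 'x set" where hU: "(\<forall>i\<le>k. openin X (U i) \<and> sX ` topspace B \<subseteq> U i) \<and>
    (\<Union>i\<le>k. U i) = topspace X \<and>
    (\<forall>i\<le>k. \<exists>\<sigma>. fib_map (subtopology X (U i)) pX E pE \<sigma> \<and>
            (\<forall>b\<in>topspace B. \<sigma> (sX b) = sE b) \<and>
            fibp_homotopic B (subtopology X (U i)) pX sX X pX sX (f \<circ> \<sigma>) id)"
    by (rule exE)
  note h1 = conjunct1[OF hU] and h2 = conjunct1[OF conjunct2[OF hU]] and h3 = conjunct2[OF conjunct2[OF hU]]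
  have "\<forall>i\<le>k. \<exists>\<sigma>. fib_map (subtopology X (U i)) pX E pE \<sigma> \<and>
            fib_homotopic (subtopology X (U i)) pX X pX (f \<circ> \<sigma>) id"
  proof (intro allI impI)
    fix i assume "i \<le> k"
    then obtain \<sigma> where s1: "fib_map (subtopology X (U i)) pX E pE \<sigma>"
      and s2: "fibp_homotopic B (subtopology X (U i)) pX sX X pX sX (f \<circ> \<sigma>) id"
      using h3 by blast
    show "\<exists>\<sigma>. fib_map (subtopology X (U i)) pX E pE \<sigma> \<and>
            fib_homotopic (subtopology X (U i)) pX X pX (f \<circ> \<sigma>) id"
      by (rule exI[of _ \<sigma>]) (use s1 fibp_imp_fib[OF s2] in blast)
  qed
  moreover have "\<forall>i\<le>k. openin X (U i)" using h1 by blast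
  ultimately show ?thesis using h2 by (intro exI[of _ U] conjI)
qed

theorem corollary3p5:
  fixes B :: "'b topology" and X :: "'x topology" and p :: "'x \<Rightarrow> 'b" and s :: "'b \<Rightarrow> 'x"
  assumes "fibp_space B X p s"
    and "fib_LEC B X p"
    and "normal_space (fib_prod X p)"
  shows "TC_B B X p \<le> TCp_B B X p s \<and> TCp_B B X p s \<le> TC_B B X p + 1"
proof
  show "TC_B B X p \<le> TCp_B B X p s"
    unfolding TC_B_def TCp_B_def secat_B_def secatp_B_def
    by (rule inf_mono_enat) (rule mono_cond)
  show "TCp_B B X p s \<le> TC_B B X p + 1"
    unfolding TC_B_def TCp_B_def secat_B_def secatp_B_def
    by (rule inf_step_enat) (rule key_step[OF assms])
qed


end
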